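(* Let $H$ be any hypergraph. If there exist a hypergraph $H'$ and an integer $s\ge 2$ such that $H'\subseteq H\subseteq H'(s)$, then $\pi(H)=\pi(H')$.
   Context: A hypergraph $H=(V,E)$ has finite vertex set $V$ and edge set $E\subseteq 2^V$; $R(H)=\{|F|:F\in E\}$. $H_1\subseteq H_2$ means there is an injective $f\colon V(H_1)\to V(H_2)$ with $f(F)\in E(H_2)$ for all $F\in E(H_1)$. For $G$ on $n$ vertices, $h_n(G)=\sum_{F\in E(G)}1/\binom{n}{|F|}$; $\pi_n(H)=\max\{h_n(G): G\text{ on } n \text{ vertices}, R(G)\subseteq R(H), H\not\subseteq G\}$, $\pi(H)=\lim_n\pi_n(H)$. For $H$ on vertex set $\{1,\dots,m\}$, the blowup $H(s)$ has vertex set $V_1\sqcup\dots\sqcup V_m$ with $|V_i|=s$ and edge set $\bigcup_{F\in E(H)}\prod_{i\in F}V_i$. *)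

theory Defs
  imports Complex_Main
begin

type_synonym 'a hypergraph = "'a set \<times> 'a set set"

definition hypergraph :: "'a hypergraph \<Rightarrow> bool" where
  "hypergraph H \<longleftrightarrow> finite (fst H) \<and> snd H \<subseteq> Pow (fst H)"

definition edge_sizes :: "'a hypergraph \<Rightarrow> nat set" where
  "edge_sizes H = card ` snd H"

definition subhyp :: "'a hypergraph \<Rightarrow> 'b hypergraph \<Rightarrow> bool" where
  "subhyp H1 H2 \<longleftrightarrow> (\<exists>f. inj_on f (fst H1) \<and> f ` fst H1 \<subseteq> fst H2 \<and>
                           (\<forall>F\<in>snd H1. f ` F \<in> snd H2))"

definition h_dens :: "nat \<Rightarrow> 'a hypergraph \<Rightarrow> real" where
  "h_dens n G = (\<Sum>F\<in>snd G. 1 / real (n choose card F))"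

definition pi_n :: "'a hypergraph \<Rightarrow> nat \<Rightarrow> real" where
  "pi_n H n = Max {h_dens n G | G :: nat hypergraph.
       hypergraph G \<and> fst G = {..<n} \<and> edge_sizes G \<subseteq> edge_sizes H \<and> \<not> subhyp H G}"

definition pi_lim :: "'a hypergraph \<Rightarrow> real" where
  "pi_lim H = lim (\<lambda>n. pi_n H n)"

text \<open>Blowup H(s): vertex i replaced by the s copies (i,0),...,(i,s-1); every edge F becomes
  all transversals, i.e. the sets {(i, g i) | i \<in> F} with g i < s.\<close>
definition blowup :: "'a hypergraph \<Rightarrow> nat \<Rightarrow> ('a \<times> nat) hypergraph" where
  "blowup H s = (fst H \<times> {..<s},
     {(\<lambda>i. (i, g i)) ` F | F g. F \<in> snd H \<and> (\<forall>i\<in>F. g i < s)})"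

end

theory Submission
  imports Defs "HOL-Library.FuncSet"
begin


lemma chebyshev_sum:
  fixes x y :: "'i \<Rightarrow> real"
  assumes "finite A" and "\<And>i j. i \<in> A \<Longrightarrow> j \<in> A \<Longrightarrow> (x i - x j) * (y i - y j) \<ge> 0"
  shows "(\<Sum>i\<in>A. x i) * (\<Sum>i\<in>A. y i) \<le> real (card A) * (\<Sum>i\<in>A. x i * y i)"
proof -
  have "0 \<le> (\<Sum>i\<in>A. \<Sum>j\<in>A. (x i - x j) * (y i - y j))"
    using assms by (intro sum_nonneg) auto
  also have "\<dots> = (\<Sum>i\<in>A. \<Sum>j\<in>A. x i * y i + x j * y j - x i * y j - x j * y i)"
    by (simp add: algebra_simps)
  also have "\<dots> = 2 * (real (card A) * (\<Sum>i\<in>A. x i * y i) - (\<Sum>i\<in>A. x i) * (\<Sum>i\<in>A. y i))"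
    by (simp add: sum_subtractf sum.distrib sum_distrib_left sum_distrib_right algebra_simps sum.swap[of "\<lambda>i j. x j * y i"])
  finally show ?thesis by simp
qed

lemma power_mean_sum:
  fixes x :: "'i \<Rightarrow> real"
  assumes "finite A" and "\<And>i. i \<in> A \<Longrightarrow> x i \<ge> 0"
  shows "(\<Sum>i\<in>A. x i) ^ Suc s \<le> real (card A) ^ s * (\<Sum>i\<in>A. x i ^ Suc s)"
proof (induction s)
  case 0 then show ?case by simp
next
  case (Suc s)
  have S0: "0 \<le> (\<Sum>i\<in>A. x i)" using assms by (intro sum_nonneg) auto
  have ch: "(\<Sum>i\<in>A. x i) * (\<Sum>i\<in>A. x i ^ Suc s) \<le> real (card A) * (\<Sum>i\<in>A. x i * x i ^ Suc s)"
  proof (rule chebyshev_sum[OF assms(1)])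
    fix i j assume "i \<in> A" "j \<in> A"
    then have a: "0 \<le> x i" "0 \<le> x j" using assms by auto
    show "0 \<le> (x i - x j) * (x i ^ Suc s - x j ^ Suc s)"
    proof (cases "x i \<le> x j")
      case True
      then have "x i ^ Suc s \<le> x j ^ Suc s" using a by (intro power_mono) auto
      then show ?thesis using True by (intro mult_nonpos_nonpos) auto
    next
      case False
      then have "x j ^ Suc s \<le> x i ^ Suc s" using a by (intro power_mono) auto
      then show ?thesis using False by (intro mult_nonneg_nonneg) auto
    qed
  qed
  have "(\<Sum>i\<in>A. x i) ^ Suc (Suc s) = (\<Sum>i\<in>A. x i) * (\<Sum>i\<in>A. x i) ^ Suc s" by simp
  also have "\<dots> \<le> (\<Sum>i\<in>A. x i) * (real (card A) ^ s * (\<Sum>i\<in>A. x i ^ Suc s))"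
    using Suc S0 by (intro mult_left_mono) auto
  also have "\<dots> = real (card A) ^ s * ((\<Sum>i\<in>A. x i) * (\<Sum>i\<in>A. x i ^ Suc s))" by simp
  also have "\<dots> \<le> real (card A) ^ s * (real (card A) * (\<Sum>i\<in>A. x i * x i ^ Suc s))"
    using ch by (intro mult_left_mono) auto
  also have "\<dots> = real (card A) ^ Suc s * (\<Sum>i\<in>A. x i ^ Suc (Suc s))" by simp
  finally show ?case .
qed



lemma card_filter_sum: "finite A \<Longrightarrow> card {x\<in>A. P x} = (\<Sum>x\<in>A. if P x then 1 else (0::nat))"
  by (simp add: sum.If_cases Int_def conj_commute)

lemma exists_above_avg:
  fixes f :: "'a \<Rightarrow> nat"
  assumes "finite S" "S \<noteq> {}"
  shows "\<exists>y\<in>S. sum f S \<le> card S * f y"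
proof (rule ccontr)
  assume "\<not> ?thesis"
  then have "\<forall>y\<in>S. card S * f y < sum f S" by auto
  then have "(\<Sum>y\<in>S. card S * f y) < (\<Sum>y\<in>S. sum f S)"
    using assms by (intro sum_strict_mono) auto
  then show False by (simp add: sum_distrib_left)
qed

lemma box_lemma:
  fixes c :: real
  assumes "c > 0" "s \<ge> 1"
  shows "\<exists>N. \<forall>n\<ge>N. \<forall>T. T \<subseteq> ({..<v} \<rightarrow>\<^sub>E {..<n}) \<longrightarrow> c * real n ^ v \<le> real (card T) \<longrightarrow>
           (\<exists>W. (\<forall>i<v. W i \<subseteq> {..<n} \<and> card (W i) = s) \<and> PiE {..<v} W \<subseteq> T)"
  using assms(1)
proof (induction v arbitrary: c)
  case 0
  show ?case
  proof (intro exI[of _ 0] allI impI)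
    fix n T assume "0 \<le> n" and T: "T \<subseteq> ({..<0::nat} \<rightarrow>\<^sub>E {..<n})" and c: "c * real n ^ 0 \<le> real (card T)"
    have "T \<noteq> {}" using c 0 by auto
    then have "T = {\<lambda>_. undefined}" using T by auto
    then show "\<exists>W. (\<forall>i<0. W i \<subseteq> {..<n} \<and> card (W i) = s) \<and> PiE {..<0} W \<subseteq> T" by auto
  qed
next
  case (Suc v)
  define c' where "c' = (c / (2 * real s)) ^ s"
  have c'pos: "c' > 0" using Suc.prems assms(2) unfolding c'_def by (intro zero_less_power divide_pos_pos) auto
  obtain N' where N'0: "\<forall>n\<ge>N'. \<forall>T. T \<subseteq> ({..<v} \<rightarrow>\<^sub>E {..<n}) \<longrightarrow> c' * real n ^ v \<le> real (card T) \<longrightarrow>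
           (\<exists>W. (\<forall>i<v. W i \<subseteq> {..<n} \<and> card (W i) = s) \<and> PiE {..<v} W \<subseteq> T)"
    using Suc.IH[OF c'pos] by (elim exE)
  have N': "(\<exists>W. (\<forall>i<v. W i \<subseteq> {..<n} \<and> card (W i) = s) \<and> PiE {..<v} W \<subseteq> T)"
    if "n \<ge> N'" "T \<subseteq> ({..<v} \<rightarrow>\<^sub>E {..<n})" "c' * real n ^ v \<le> real (card T)" for n T
    using N'0 that by blast
  define N where "N = max N' (s + nat \<lceil>2 * real s / c\<rceil> + 1)"
  show ?case
  proof (intro exI[of _ N] allI impI)
    fix n T assume nN: "n \<ge> N" and T: "T \<subseteq> ({..<Suc v} \<rightarrow>\<^sub>E {..<n})"
      and cT: "c * real n ^ Suc v \<le> real (card T)"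
    have nN': "n \<ge> N'" and ns: "n \<ge> s" and n1: "n \<ge> 1" using nN by (auto simp: N_def)
    have "real n \<ge> 2 * real s / c" using nN unfolding N_def by linarith
    then have n2: "2 * real s \<le> c * real n" using Suc.prems by (simp add: field_simps)
    define A where "A = {..<v} \<rightarrow>\<^sub>E {..<n}"
    have finA: "finite A" unfolding A_def by (simp add: finite_PiE)
    have cardA: "card A = n ^ v" unfolding A_def by (simp add: card_funcsetE)
    define L where "L r = {y \<in> {..<n}. r(v:=y) \<in> T}" for r
    have finL: "finite (L r)" for r unfolding L_def by auto
    have finT: "finite T" using T by (rule finite_subset) (simp add: finite_PiE)
    have Teq: "T = (\<lambda>(r,y). r(v:=y)) ` Sigma A L"
    proof
      show "(\<lambda>(r,y). r(v:=y)) ` Sigma A L \<subseteq> T" by (auto simp: L_def)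
      show "T \<subseteq> (\<lambda>(r,y). r(v:=y)) ` Sigma A L"
      proof
        fix f assume f: "f \<in> T"
        then have fP: "f \<in> {..<Suc v} \<rightarrow>\<^sub>E {..<n}" using T by auto
        have "f = (restrict f {..<v})(v := f v)"
        proof
          fix x show "f x = ((restrict f {..<v})(v := f v)) x"
            using fP by (cases "x < v"; cases "x = v") (auto simp: PiE_def extensional_def)
        qed
        moreover have "restrict f {..<v} \<in> A" using fP by (auto simp: A_def PiE_def)
        moreover have "f v \<in> L (restrict f {..<v})"
          using fP f calculation(1) by (auto simp: L_def PiE_def)
        ultimately show "f \<in> (\<lambda>(r,y). r(v:=y)) ` Sigma A L" by (intro image_eqI[of _ _ "(restrict f {..<v}, f v)"]) auto
      qed
    qed
    have inj: "inj_on (\<lambda>(r,y). r(v:=y)) (Sigma A L)"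
    proof (rule inj_onI, clarsimp)
      fix r1 y1 r2 y2 assume r: "r1 \<in> A" "r2 \<in> A" and e: "r1(v := y1) = r2(v := y2)"
      have "y1 = y2" using fun_cong[OF e, of v] by simp
      moreover have "r1 = r2"
      proof
        fix x show "r1 x = r2 x"
        proof (cases "x = v")
          case True then show ?thesis using r by (auto simp: A_def PiE_def extensional_def)
        next
          case False then show ?thesis using fun_cong[OF e, of x] by simp
        qed
      qed
      ultimately show "r1 = r2 \<and> y1 = y2" by simp
    qed
    have cardT: "card T = (\<Sum>r\<in>A. card (L r))"
      using card_image[OF inj] Teq finA finL by simp
    define Ss where "Ss = {Y. Y \<subseteq> {..<n} \<and> card Y = s}"
    have finSs: "finite Ss" unfolding Ss_def by auto
    have cardSs: "card Ss = n choose s" unfolding Ss_def using n_subsets[of "{..<n}" s] by simp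
    have Ssne: "Ss \<noteq> {}"
    proof -
      have "{..<s} \<in> Ss" using ns by (auto simp: Ss_def)
      then show ?thesis by auto
    qed
    define TY where "TY Y = {r \<in> A. Y \<subseteq> L r}" for Y
    have swap: "(\<Sum>r\<in>A. card (L r) choose s) = (\<Sum>Y\<in>Ss. card (TY Y))"
    proof -
      have "card (L r) choose s = card {Y\<in>Ss. Y \<subseteq> L r}" for r
      proof -
        have "{Y\<in>Ss. Y \<subseteq> L r} = {Y. Y \<subseteq> L r \<and> card Y = s}" by (auto simp: Ss_def L_def)
        then show ?thesis using n_subsets[OF finL[of r], of s] by simp
      qed
      then have "(\<Sum>r\<in>A. card (L r) choose s) = (\<Sum>r\<in>A. \<Sum>Y\<in>Ss. if Y \<subseteq> L r then 1 else 0)"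
        by (simp add: card_filter_sum[OF finSs])
      also have "\<dots> = (\<Sum>Y\<in>Ss. \<Sum>r\<in>A. if Y \<subseteq> L r then 1 else 0)" by (rule sum.swap)
      also have "\<dots> = (\<Sum>Y\<in>Ss. card (TY Y))" by (simp add: TY_def card_filter_sum[OF finA])
      finally show ?thesis .
    qed
    define x where "x r = real (card (L r) - s) / real s" for r
    have x0: "x r \<ge> 0" for r by (simp add: x_def)
    have xb: "x r ^ s \<le> real (card (L r) choose s)" for r
    proof (cases "card (L r) \<ge> s")
      case True
      have "x r \<le> real (card (L r)) / real s" unfolding x_def using True
        by (intro divide_right_mono) auto
      then have "x r ^ s \<le> (real (card (L r)) / real s) ^ s" using x0 by (intro power_mono) auto
      also have "\<dots> \<le> real (card (L r) choose s)" using binomial_ge_n_over_k_pow_k[OF True] by simp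
      finally show ?thesis .
    next
      case False then show ?thesis using assms(2) by (simp add: x_def zero_power)
    qed
    have sumx: "(\<Sum>r\<in>A. x r) \<ge> c * real n ^ Suc v / (2 * real s)"
    proof -
      have "(\<Sum>r\<in>A. x r) = (\<Sum>r\<in>A. real (card (L r) - s)) / real s"
        by (simp add: x_def sum_divide_distrib)
      moreover have "(\<Sum>r\<in>A. real (card (L r) - s)) \<ge> (\<Sum>r\<in>A. real (card (L r)) - real s)"
        by (intro sum_mono) auto
      moreover have "(\<Sum>r\<in>A. real (card (L r)) - real s) = real (card T) - real s * real n ^ v"
        by (simp add: sum_subtractf cardT cardA)
      moreover have "real s * real n ^ v \<le> c * real n ^ Suc v / 2"
      proof -
        have "real s * real n ^ v * 2 \<le> c * real n * real n ^ v"
          using n2 by (simp add: mult.commute mult.left_commute) (metis mult.assoc mult_right_mono zero_le_power of_nat_0_le_iff mult.commute)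
        then show ?thesis by simp
      qed
      ultimately show ?thesis using cT assms(2)
        by (simp add: divide_right_mono field_simps) 
    qed
    have pm: "(\<Sum>r\<in>A. x r) ^ s \<le> real (card A) ^ (s - 1) * (\<Sum>r\<in>A. x r ^ s)"
      using power_mean_sum[OF finA, of x "s - 1"] x0 assms(2) by simp
    have npos: "real n > 0" using n1 by simp
    have key: "c' * real n ^ v * real n ^ s * (real n ^ v) ^ (s - 1) \<le> (\<Sum>r\<in>A. x r) ^ s"
    proof -
      have "c' * real n ^ v * real n ^ s * (real n ^ v) ^ (s - 1) = (c * real n ^ Suc v / (2 * real s)) ^ s"
      proof -
        have "real n ^ v * real n ^ s * (real n ^ v) ^ (s - 1) = (real n ^ Suc v) ^ s"
        proof -
          have "v + s + v * (s - 1) = Suc v * s" using assms(2) by (cases s) (auto simp: algebra_simps)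
          have "real n ^ v * real n ^ s * (real n ^ v) ^ (s - 1) = real n ^ (v + s + v * (s - 1))"
            by (simp add: power_add power_mult)
          also have "\<dots> = real n ^ (Suc v * s)" using \<open>v + s + v * (s - 1) = Suc v * s\<close> by (metis)
          also have "\<dots> = (real n ^ Suc v) ^ s" by (metis power_mult)
          finally show ?thesis .
        qed
        then show ?thesis by (simp add: c'_def power_mult_distrib power_divide field_simps)
      qed
      also have "\<dots> \<le> (\<Sum>r\<in>A. x r) ^ s"
        using sumx Suc.prems by (intro power_mono) auto
      finally show ?thesis .
    qed
    have "c' * real n ^ v * real n ^ s \<le> (\<Sum>r\<in>A. x r ^ s)"
    proof -
      have "c' * real n ^ v * real n ^ s * (real n ^ v) ^ (s - 1) \<le> (\<Sum>r\<in>A. x r ^ s) * (real n ^ v) ^ (s - 1)"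
        using key pm cardA by (simp add: mult.commute)
      then show ?thesis using npos by (simp add: mult_le_cancel_right)
    qed
    also have "\<dots> \<le> (\<Sum>r\<in>A. real (card (L r) choose s))" by (intro sum_mono xb)
    also have "\<dots> = real (\<Sum>Y\<in>Ss. card (TY Y))" using swap by (metis of_nat_sum)
    finally have big: "c' * real n ^ v * real n ^ s \<le> real (\<Sum>Y\<in>Ss. card (TY Y))" .
    obtain Y where Y: "Y \<in> Ss" and Yb: "(\<Sum>Y\<in>Ss. card (TY Y)) \<le> card Ss * card (TY Y)"
      using exists_above_avg[OF finSs Ssne] by blast
    have "card Ss \<le> n ^ s" using cardSs binomial_le_pow[OF ns] by simp
    then have "real (\<Sum>Y\<in>Ss. card (TY Y)) \<le> real n ^ s * real (card (TY Y))"
      using Yb by (metis (mono_tags) mult_le_mono1 of_nat_le_iff of_nat_mult of_nat_power order_trans)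
    with big have "c' * real n ^ v * real n ^ s \<le> real n ^ s * real (card (TY Y))" by linarith
    then have cTY: "c' * real n ^ v \<le> real (card (TY Y))" using npos by (simp add: mult.commute)
    have TYA: "TY Y \<subseteq> {..<v} \<rightarrow>\<^sub>E {..<n}" by (auto simp: TY_def A_def)
    obtain W' where W': "\<forall>i<v. W' i \<subseteq> {..<n} \<and> card (W' i) = s" "PiE {..<v} W' \<subseteq> TY Y"
      using N'[OF nN' TYA cTY] by blast
    define W where "W = W'(v := Y)"
    show "\<exists>W. (\<forall>i<Suc v. W i \<subseteq> {..<n} \<and> card (W i) = s) \<and> PiE {..<Suc v} W \<subseteq> T"
    proof (intro exI[of _ W] conjI allI impI)
      fix i assume "i < Suc v"
      then show "W i \<subseteq> {..<n}" "card (W i) = s" using W' Y by (auto simp: W_def Ss_def less_Suc_eq)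
    next
      show "PiE {..<Suc v} W \<subseteq> T"
      proof
        fix g assume g: "g \<in> PiE {..<Suc v} W"
        have gi: "g i \<in> W' i" if "i < v" for i
        proof -
          have "g i \<in> W i" using g that by (auto simp: PiE_def Pi_def)
          then show ?thesis using that by (simp add: W_def)
        qed
        have "restrict g {..<v} \<in> PiE {..<v} W'" using gi by auto
        then have rT: "restrict g {..<v} \<in> TY Y" using W'(2) by blast
        have "g v \<in> Y" using g by (auto simp: W_def PiE_def Pi_def)
        then have "(restrict g {..<v})(v := g v) \<in> T" using rT by (auto simp: TY_def L_def)
        moreover have "(restrict g {..<v})(v := g v) = g"
        proof
          fix z show "((restrict g {..<v})(v := g v)) z = g z"
            using g by (cases "z < v"; cases "z = v") (auto simp: PiE_def extensional_def)
        qed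
        ultimately show "g \<in> T" by simp
      qed
    qed
  qed
qed



definition injs :: "nat \<Rightarrow> nat \<Rightarrow> (nat \<Rightarrow> nat) set" where
  "injs m n = {\<sigma> \<in> {..<m} \<rightarrow>\<^sub>E {..<n}. inj_on \<sigma> {..<m}}"

definition pb :: "nat \<Rightarrow> (nat \<Rightarrow> nat) \<Rightarrow> nat hypergraph \<Rightarrow> nat hypergraph" where
  "pb m \<sigma> G = ({..<m}, {F. F \<subseteq> {..<m} \<and> \<sigma> ` F \<in> snd G})"

definition cnt :: "nat \<Rightarrow> nat \<Rightarrow> nat set \<Rightarrow> nat" where
  "cnt m n E = card {\<sigma> \<in> injs m n. E \<subseteq> \<sigma> ` {..<m}}"

lemma finite_injs: "finite (injs m n)"
  unfolding injs_def by (rule finite_subset[of _ "{..<m} \<rightarrow>\<^sub>E {..<n}"]) (auto simp: finite_PiE)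

lemma injs_nonempty: "m \<le> n \<Longrightarrow> injs m n \<noteq> {}"
proof -
  assume "m \<le> n"
  then have "restrict id {..<m} \<in> injs m n" by (auto simp: injs_def inj_on_def)
  then show ?thesis by auto
qed

lemma perm_exists:
  fixes E E' :: "nat set"
  assumes "E \<subseteq> {..<n}" "E' \<subseteq> {..<n}" "card E = card E'"
  shows "\<exists>\<pi>. bij_betw \<pi> {..<n} {..<n} \<and> \<pi> ` E = E'"
proof -
  have fin1: "finite E" by (rule finite_subset[OF assms(1)]) simp
  have fin2: "finite E'" by (rule finite_subset[OF assms(2)]) simp
  note fin = fin1 fin2
  obtain f where f: "bij_betw f E E'" using finite_same_card_bij[OF fin assms(3)] by blast
  have "card ({..<n} - E) = card ({..<n} - E')"
    using assms fin by (simp add: card_Diff_subset)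
  then obtain g where g: "bij_betw g ({..<n} - E) ({..<n} - E')"
    using finite_same_card_bij[of "{..<n} - E" "{..<n} - E'"] by auto
  define \<pi> where "\<pi> x = (if x \<in> E then f x else g x)" for x
  have b1: "bij_betw \<pi> E E'" using f by (rule bij_betw_cong[THEN iffD1, rotated]) (simp add: \<pi>_def)
  have b2: "bij_betw \<pi> ({..<n} - E) ({..<n} - E')" using g by (rule bij_betw_cong[THEN iffD1, rotated]) (simp add: \<pi>_def)
  have "bij_betw \<pi> (E \<union> ({..<n} - E)) (E' \<union> ({..<n} - E'))"
    by (rule bij_betw_combine[OF b1 b2]) auto
  moreover have "E \<union> ({..<n} - E) = {..<n}" "E' \<union> ({..<n} - E') = {..<n}" using assms by auto
  ultimately show ?thesis using b1 by (auto simp: bij_betw_def)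
qed

lemma cnt_le:
  assumes "E \<subseteq> {..<n}" "E' \<subseteq> {..<n}" "card E = card E'"
  shows "cnt m n E \<le> cnt m n E'"
proof -
  obtain \<pi> where \<pi>: "bij_betw \<pi> {..<n} {..<n}" "\<pi> ` E = E'" using perm_exists[OF assms] by blast
  define \<Phi> where "\<Phi> \<sigma> = restrict (\<pi> \<circ> \<sigma>) {..<m}" for \<sigma>
  have "card {\<sigma> \<in> injs m n. E \<subseteq> \<sigma> ` {..<m}} \<le> card {\<sigma> \<in> injs m n. E' \<subseteq> \<sigma> ` {..<m}}"
  proof (rule card_inj_on_le[of \<Phi>])
    show "finite {\<sigma> \<in> injs m n. E' \<subseteq> \<sigma> ` {..<m}}" using finite_injs by auto
    show "inj_on \<Phi> {\<sigma> \<in> injs m n. E \<subseteq> \<sigma> ` {..<m}}"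
    proof (rule inj_onI)
      fix \<sigma>1 \<sigma>2 assume s1: "\<sigma>1 \<in> {\<sigma> \<in> injs m n. E \<subseteq> \<sigma> ` {..<m}}" and s2: "\<sigma>2 \<in> {\<sigma> \<in> injs m n. E \<subseteq> \<sigma> ` {..<m}}"
        and e: "\<Phi> \<sigma>1 = \<Phi> \<sigma>2"
      show "\<sigma>1 = \<sigma>2"
      proof
        fix i show "\<sigma>1 i = \<sigma>2 i"
        proof (cases "i < m")
          case True
          then have "\<pi> (\<sigma>1 i) = \<pi> (\<sigma>2 i)" using fun_cong[OF e, of i] by (simp add: \<Phi>_def)
          moreover have "\<sigma>1 i \<in> {..<n}" "\<sigma>2 i \<in> {..<n}" using s1 s2 True by (auto simp: injs_def PiE_def Pi_def)
          ultimately show ?thesis using \<pi>(1) by (auto simp: bij_betw_def inj_on_def)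
        next
          case False then show ?thesis using s1 s2 by (auto simp: injs_def PiE_def extensional_def)
        qed
      qed
    qed
    show "\<Phi> ` {\<sigma> \<in> injs m n. E \<subseteq> \<sigma> ` {..<m}} \<subseteq> {\<sigma> \<in> injs m n. E' \<subseteq> \<sigma> ` {..<m}}"
    proof clarify
      fix \<sigma> assume s: "\<sigma> \<in> injs m n" "E \<subseteq> \<sigma> ` {..<m}"
      have sr: "\<sigma> ` {..<m} \<subseteq> {..<n}" "inj_on \<sigma> {..<m}" using s(1) by (auto simp: injs_def PiE_def Pi_def)
      have "\<Phi> \<sigma> \<in> injs m n"
      proof -
        have "\<Phi> \<sigma> \<in> {..<m} \<rightarrow>\<^sub>E {..<n}" using sr bij_betwE[OF \<pi>(1)] by (auto simp: \<Phi>_def)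
        moreover have "inj_on (\<Phi> \<sigma>) {..<m}"
        proof -
          have "inj_on (\<pi> \<circ> \<sigma>) {..<m}"
            using sr \<pi>(1) by (intro comp_inj_on) (auto simp: bij_betw_def intro: inj_on_subset)
          then show ?thesis by (simp add: \<Phi>_def inj_on_def)
        qed
        ultimately show ?thesis by (simp add: injs_def)
      qed
      moreover have "E' \<subseteq> \<Phi> \<sigma> ` {..<m}"
      proof -
        have "\<Phi> \<sigma> ` {..<m} = \<pi> ` \<sigma> ` {..<m}" by (auto simp: \<Phi>_def)
        then show ?thesis using s(2) \<pi>(2) by auto
      qed
      ultimately show "\<Phi> \<sigma> \<in> injs m n \<and> E' \<subseteq> \<Phi> \<sigma> ` {..<m}" by simp
    qed
  qed
  then show ?thesis by (simp add: cnt_def)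
qed

lemma cnt_eq:
  assumes "E \<subseteq> {..<n}" "E' \<subseteq> {..<n}" "card E = card E'"
  shows "cnt m n E = cnt m n E'"
  by (intro antisym cnt_le) (use assms in auto)

lemma cnt_sum:
  assumes "m \<le> n"
  shows "(\<Sum>E\<in>{E. E \<subseteq> {..<n} \<and> card E = k}. cnt m n E) = card (injs m n) * (m choose k)"
proof -
  define Ks where "Ks = {E. E \<subseteq> {..<n} \<and> card E = k}"
  have finK: "finite Ks" unfolding Ks_def by auto
  have "(\<Sum>E\<in>Ks. cnt m n E) = (\<Sum>E\<in>Ks. \<Sum>\<sigma>\<in>injs m n. if E \<subseteq> \<sigma> ` {..<m} then 1 else 0)"
    by (simp add: cnt_def card_filter_sum[OF finite_injs])
  also have "\<dots> = (\<Sum>\<sigma>\<in>injs m n. \<Sum>E\<in>Ks. if E \<subseteq> \<sigma> ` {..<m} then 1 else 0)" by (rule sum.swap)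
  also have "\<dots> = (\<Sum>\<sigma>\<in>injs m n. card {E\<in>Ks. E \<subseteq> \<sigma> ` {..<m}})" by (simp add: card_filter_sum[OF finK])
  also have "\<dots> = (\<Sum>\<sigma>\<in>injs m n. m choose k)"
  proof (rule sum.cong[OF refl])
    fix \<sigma> assume s: "\<sigma> \<in> injs m n"
    have sr: "\<sigma> ` {..<m} \<subseteq> {..<n}" "inj_on \<sigma> {..<m}" using s by (auto simp: injs_def PiE_def Pi_def)
    have "{E\<in>Ks. E \<subseteq> \<sigma> ` {..<m}} = {E. E \<subseteq> \<sigma> ` {..<m} \<and> card E = k}" using sr(1) unfolding Ks_def by blast
    moreover have "card (\<sigma> ` {..<m}) = m" using sr card_image by fastforce
    ultimately show "card {E\<in>Ks. E \<subseteq> \<sigma> ` {..<m}} = m choose k" using n_subsets[of "\<sigma> ` {..<m}" k] by simp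
  qed
  also have "\<dots> = card (injs m n) * (m choose k)" by simp
  finally show ?thesis by (simp add: Ks_def)
qed

lemma cnt_formula:
  assumes "m \<le> n" "E \<subseteq> {..<n}"
  shows "cnt m n E * (n choose card E) = card (injs m n) * (m choose card E)"
proof -
  define Ks where "Ks = {E'. E' \<subseteq> {..<n} \<and> card E' = card E}"
  have "(\<Sum>E'\<in>Ks. cnt m n E') = (\<Sum>E'\<in>Ks. cnt m n E)"
    by (rule sum.cong[OF refl]) (auto simp: Ks_def intro!: cnt_eq assms)
  also have "\<dots> = card Ks * cnt m n E" by simp
  also have "card Ks = n choose card E" unfolding Ks_def using n_subsets[of "{..<n}" "card E"] by simp
  finally show ?thesis using cnt_sum[OF assms(1), of "card E"] by (simp add: Ks_def mult.commute)
qed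

lemma pb_dens:
  assumes "\<sigma> \<in> injs m n" "finite (snd G)"
  shows "h_dens m (pb m \<sigma> G) = (\<Sum>E\<in>{E\<in>snd G. E \<subseteq> \<sigma> ` {..<m}}. 1 / real (m choose card E))"
proof -
  have inj: "inj_on \<sigma> {..<m}" using assms by (auto simp: injs_def)
  define S where "S = {F. F \<subseteq> {..<m} \<and> \<sigma> ` F \<in> snd G}"
  have injS: "inj_on (image \<sigma>) S"
    using inj_on_image_Pow[OF inj] by (rule inj_on_subset) (auto simp: S_def)
  have img: "image \<sigma> ` S = {E\<in>snd G. E \<subseteq> \<sigma> ` {..<m}}"
  proof
    show "image \<sigma> ` S \<subseteq> {E\<in>snd G. E \<subseteq> \<sigma> ` {..<m}}" by (auto simp: S_def)
    show "{E\<in>snd G. E \<subseteq> \<sigma> ` {..<m}} \<subseteq> image \<sigma> ` S"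
    proof clarify
      fix E assume E: "E \<in> snd G" "E \<subseteq> \<sigma> ` {..<m}"
      define F where "F = {i\<in>{..<m}. \<sigma> i \<in> E}"
      have "\<sigma> ` F = E" using E by (auto simp: F_def)
      then show "E \<in> image \<sigma> ` S" using E unfolding S_def by (intro image_eqI[of _ _ F]) (auto simp: F_def)
    qed
  qed
  have "h_dens m (pb m \<sigma> G) = (\<Sum>F\<in>S. 1 / real (m choose card F))" by (simp add: h_dens_def pb_def S_def)
  also have "\<dots> = (\<Sum>F\<in>S. 1 / real (m choose card (\<sigma> ` F)))"
  proof (rule sum.cong[OF refl])
    fix F assume "F \<in> S"
    then have "card (\<sigma> ` F) = card F" using inj by (intro card_image) (auto simp: S_def intro: inj_on_subset)
    then show "1 / real (m choose card F) = 1 / real (m choose card (\<sigma> ` F))" by simp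
  qed
  also have "\<dots> = (\<Sum>E\<in>image \<sigma> ` S. 1 / real (m choose card E))"
    using sum.reindex[OF injS, of "\<lambda>E. 1 / real (m choose card E)"] by simp
  finally show ?thesis using img by simp
qed

lemma averaging:
  assumes "snd G \<subseteq> Pow {..<n}" "\<forall>F\<in>snd G. card F \<le> m" "m \<le> n"
  shows "(\<Sum>\<sigma>\<in>injs m n. h_dens m (pb m \<sigma> G)) = real (card (injs m n)) * h_dens n G"
proof -
  have finG: "finite (snd G)" using assms(1) by (rule finite_subset) auto
  have "(\<Sum>\<sigma>\<in>injs m n. h_dens m (pb m \<sigma> G))
      = (\<Sum>\<sigma>\<in>injs m n. \<Sum>E\<in>snd G. if E \<subseteq> \<sigma> ` {..<m} then 1 / real (m choose card E) else 0)"
    by (rule sum.cong[OF refl]) (simp add: pb_dens[OF _ finG] sum.inter_filter[OF finG])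
  also have "\<dots> = (\<Sum>E\<in>snd G. \<Sum>\<sigma>\<in>injs m n. if E \<subseteq> \<sigma> ` {..<m} then 1 / real (m choose card E) else 0)"
    by (rule sum.swap)
  also have "\<dots> = (\<Sum>E\<in>snd G. real (cnt m n E) / real (m choose card E))"
    by (rule sum.cong[OF refl]) (simp add: sum.If_cases[OF finite_injs] cnt_def Int_def)
  also have "\<dots> = (\<Sum>E\<in>snd G. real (card (injs m n)) * (1 / real (n choose card E)))"
  proof (rule sum.cong[OF refl])
    fix E assume E: "E \<in> snd G"
    have En: "E \<subseteq> {..<n}" using E assms(1) by auto
    have km: "card E \<le> m" using E assms(2) by auto
    have kn: "card E \<le> n" using km assms(3) by simp
    have p1: "real (m choose card E) > 0" using km by simp
    have p2: "real (n choose card E) > 0" using kn by simp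
    have "real (cnt m n E) * real (n choose card E) = real (card (injs m n)) * real (m choose card E)"
      using cnt_formula[OF assms(3) En] by (metis of_nat_mult)
    then show "real (cnt m n E) / real (m choose card E) = real (card (injs m n)) * (1 / real (n choose card E))"
      using p1 p2 by (simp add: field_simps)
  qed
  also have "\<dots> = real (card (injs m n)) * h_dens n G" by (simp add: h_dens_def sum_distrib_left)
  finally show ?thesis .
qed



definition Adm :: "'b hypergraph \<Rightarrow> nat \<Rightarrow> nat hypergraph set" where
  "Adm H n = {G. hypergraph G \<and> fst G = {..<n} \<and> edge_sizes G \<subseteq> edge_sizes H \<and> \<not> subhyp H G}"

lemma pi_n_Adm: "pi_n H n = Max (h_dens n ` Adm H n)"
  unfolding pi_n_def Adm_def by (rule arg_cong[where f=Max]) auto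

lemma finite_Adm: "finite (Adm H n)"
proof (rule finite_subset)
  show "Adm H n \<subseteq> {{..<n}} \<times> Pow (Pow {..<n})" unfolding Adm_def hypergraph_def by force
qed auto

lemma pi_n_ge: "G \<in> Adm H n \<Longrightarrow> h_dens n G \<le> pi_n H n"
  unfolding pi_n_Adm by (intro Max_ge finite_imageI finite_Adm) auto

lemma pi_n_attained: "Adm H n \<noteq> {} \<Longrightarrow> \<exists>G\<in>Adm H n. pi_n H n = h_dens n G"
proof -
  assume "Adm H n \<noteq> {}"
  then have "Max (h_dens n ` Adm H n) \<in> h_dens n ` Adm H n" by (intro Max_in finite_imageI finite_Adm) auto
  then show ?thesis unfolding pi_n_Adm by auto
qed

lemma empty_Adm: "snd H \<noteq> {} \<Longrightarrow> ({..<n}, {}) \<in> Adm H n"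
  by (auto simp: Adm_def hypergraph_def edge_sizes_def subhyp_def)

lemma Adm_nonempty: "snd H \<noteq> {} \<Longrightarrow> Adm H n \<noteq> {}"
  using empty_Adm by blast

lemma pi_n_nonneg: "snd H \<noteq> {} \<Longrightarrow> 0 \<le> pi_n H n"
  using pi_n_ge[OF empty_Adm, of H n] by (simp add: h_dens_def)

lemma subhyp_trans:
  assumes "subhyp A B" "subhyp B C" shows "subhyp A C"
proof -
  obtain f where f: "inj_on f (fst A)" "f ` fst A \<subseteq> fst B" "\<forall>F\<in>snd A. f ` F \<in> snd B" using assms(1) by (auto simp: subhyp_def)
  obtain g where g: "inj_on g (fst B)" "g ` fst B \<subseteq> fst C" "\<forall>F\<in>snd B. g ` F \<in> snd C" using assms(2) by (auto simp: subhyp_def)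
  have "inj_on (g \<circ> f) (fst A)" using f g by (intro comp_inj_on) (auto intro: inj_on_subset)
  moreover have "(g \<circ> f) ` fst A \<subseteq> fst C" using f g by auto
  moreover have "\<forall>F\<in>snd A. (g \<circ> f) ` F \<in> snd C"
  proof
    fix F assume "F \<in> snd A"
    moreover have "(g \<circ> f) ` F = g ` (f ` F)" by (rule image_comp[symmetric])
    ultimately show "(g \<circ> f) ` F \<in> snd C" using f g by simp
  qed
  ultimately show ?thesis unfolding subhyp_def by blast
qed

lemma subhyp_sizes:
  assumes "hypergraph A" "subhyp A B" shows "edge_sizes A \<subseteq> edge_sizes B"
proof
  fix k assume "k \<in> edge_sizes A"
  then obtain F where F: "F \<in> snd A" "k = card F" by (auto simp: edge_sizes_def)
  obtain f where f: "inj_on f (fst A)" "\<forall>F\<in>snd A. f ` F \<in> snd B" using assms(2) by (auto simp: subhyp_def)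
  have "F \<subseteq> fst A" using F assms(1) by (auto simp: hypergraph_def)
  then have "card (f ` F) = card F" using f by (intro card_image) (auto intro: inj_on_subset)
  then show "k \<in> edge_sizes B" using f F by (auto simp: edge_sizes_def intro!: image_eqI[of _ _ "f ` F"])
qed

lemma blowup_sizes: "edge_sizes (blowup H s) \<subseteq> edge_sizes H"
proof
  fix k assume "k \<in> edge_sizes (blowup H s)"
  then obtain X where X: "X \<in> snd (blowup H s)" "k = card X" by (auto simp: edge_sizes_def)
  then obtain F g where F0: "F \<in> snd H" "X = (\<lambda>i. (i, g i)) ` F" by (auto simp: blowup_def)
  then have F: "F \<in> snd H" "k = card ((\<lambda>i. (i, g i)) ` F)" using X by auto
  have "card ((\<lambda>i. (i, g i)) ` F) = card F" by (intro card_image) (auto simp: inj_on_def)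
  then show "k \<in> edge_sizes H" using F by (auto simp: edge_sizes_def)
qed

lemma pb_hyp: "hypergraph (pb m \<sigma> G)" "fst (pb m \<sigma> G) = {..<m}"
  by (auto simp: pb_def hypergraph_def)

lemma pb_sizes: "\<sigma> \<in> injs m n \<Longrightarrow> edge_sizes (pb m \<sigma> G) \<subseteq> edge_sizes G"
proof
  fix k assume s: "\<sigma> \<in> injs m n" and "k \<in> edge_sizes (pb m \<sigma> G)"
  then obtain F where F: "F \<subseteq> {..<m}" "\<sigma> ` F \<in> snd G" "k = card F" by (auto simp: edge_sizes_def pb_def)
  have "card (\<sigma> ` F) = card F" using s F by (intro card_image) (auto simp: injs_def intro: inj_on_subset)
  then show "k \<in> edge_sizes G" using F by (auto simp: edge_sizes_def intro!: image_eqI[of _ _ "\<sigma> ` F"])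
qed

lemma pb_subhyp:
  assumes "\<sigma> \<in> injs m n" "fst G = {..<n}" "subhyp X (pb m \<sigma> G)"
  shows "subhyp X G"
proof -
  have "subhyp (pb m \<sigma> G) G"
    unfolding subhyp_def using assms(1,2) by (intro exI[of _ \<sigma>]) (auto simp: pb_def injs_def PiE_def Pi_def)
  then show ?thesis using subhyp_trans[OF assms(3)] by blast
qed

lemma h_bound:
  assumes "hypergraph G'" "fst G' = {..<m}"
  shows "h_dens m G' \<le> real (card (edge_sizes G'))"
proof -
  have finE: "finite (snd G')" using assms by (auto simp: hypergraph_def intro: finite_subset)
  have "h_dens m G' = (\<Sum>k\<in>card ` snd G'. \<Sum>F\<in>{F\<in>snd G'. card F = k}. 1 / real (m choose card F))"
    unfolding h_dens_def by (rule sum.image_gen[OF finE])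
  also have "\<dots> \<le> (\<Sum>k\<in>card ` snd G'. 1)"
  proof (rule sum_mono)
    fix k assume "k \<in> card ` snd G'"
    then obtain F0 where "F0 \<in> snd G'" "k = card F0" by auto
    then have km: "k \<le> m" using assms by (auto simp: hypergraph_def intro!: card_mono[of "{..<m}", simplified])
    have sub: "{F\<in>snd G'. card F = k} \<subseteq> {F. F \<subseteq> {..<m} \<and> card F = k}" using assms by (auto simp: hypergraph_def)
    have "card {F\<in>snd G'. card F = k} \<le> m choose k"
      using card_mono[OF _ sub] n_subsets[of "{..<m}" k] by simp
    then have "(\<Sum>F\<in>{F\<in>snd G'. card F = k}. 1 / real (m choose card F)) = real (card {F\<in>snd G'. card F = k}) / real (m choose k)"
      by simp
    also have "\<dots> \<le> 1" using km \<open>card {F\<in>snd G'. card F = k} \<le> m choose k\<close> by (simp add: divide_le_eq_1)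
    finally show "(\<Sum>F\<in>{F\<in>snd G'. card F = k}. 1 / real (m choose card F)) \<le> 1" .
  qed
  also have "\<dots> = real (card (edge_sizes G'))" by (simp add: edge_sizes_def)
  finally show ?thesis .
qed

lemma pi_mono:
  fixes H :: "'b hypergraph"
  assumes "snd H \<noteq> {}" "\<forall>k\<in>edge_sizes H. k \<le> n"
  shows "pi_n H (Suc n) \<le> pi_n H n"
proof -
  obtain G where G: "G \<in> Adm H (Suc n)" "pi_n H (Suc n) = h_dens (Suc n) G"
    using pi_n_attained[OF Adm_nonempty[OF assms(1)]] by blast
  have hG: "hypergraph G" "fst G = {..<Suc n}" "edge_sizes G \<subseteq> edge_sizes H" "\<not> subhyp H G" using G(1) by (auto simp: Adm_def)
  have EP: "snd G \<subseteq> Pow {..<Suc n}" using hG by (auto simp: hypergraph_def)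
  have Ek: "\<forall>F\<in>snd G. card F \<le> n" using hG assms(2) by (auto simp: edge_sizes_def)
  have avg: "(\<Sum>\<sigma>\<in>injs n (Suc n). h_dens n (pb n \<sigma> G)) = real (card (injs n (Suc n))) * h_dens (Suc n) G"
    by (rule averaging[OF EP Ek]) simp
  have "(\<Sum>\<sigma>\<in>injs n (Suc n). h_dens n (pb n \<sigma> G)) \<le> (\<Sum>\<sigma>\<in>injs n (Suc n). pi_n H n)"
  proof (rule sum_mono)
    fix \<sigma> assume s: "\<sigma> \<in> injs n (Suc n)"
    have "\<not> subhyp H (pb n \<sigma> G)" using pb_subhyp[OF s hG(2), of H] hG(4) by blast
    then have "pb n \<sigma> G \<in> Adm H n"
      using pb_hyp pb_sizes[OF s, of G] hG pb_subhyp[OF s hG(2)] by (auto simp: Adm_def)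
    then show "h_dens n (pb n \<sigma> G) \<le> pi_n H n" by (rule pi_n_ge)
  qed
  then have "real (card (injs n (Suc n))) * h_dens (Suc n) G \<le> real (card (injs n (Suc n))) * pi_n H n"
    using avg by simp
  moreover have "card (injs n (Suc n)) > 0" using injs_nonempty[of n "Suc n"] finite_injs by (simp add: card_gt_0_iff)
  ultimately show ?thesis using G(2) by simp
qed

lemma pi_conv:
  fixes H :: "'b hypergraph"
  assumes "hypergraph H" "snd H \<noteq> {}"
  obtains L K where "(\<lambda>n. pi_n H n) \<longlonglongrightarrow> L" "\<And>n. n \<ge> K \<Longrightarrow> L \<le> pi_n H n" "\<forall>k\<in>edge_sizes H. k \<le> K"
proof -
  have fin: "finite (edge_sizes H)" using assms(1) by (auto simp: hypergraph_def edge_sizes_def intro: finite_subset)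
  define K where "K = Max (edge_sizes H)"
  have Kb: "\<forall>k\<in>edge_sizes H. k \<le> K" using fin by (auto simp: K_def)
  have dec: "decseq (\<lambda>i. pi_n H (i + K))"
  proof (rule decseq_SucI)
    fix i show "pi_n H (Suc i + K) \<le> pi_n H (i + K)" using pi_mono[OF assms(2), of "i + K"] Kb by force
  qed
  obtain L where L: "(\<lambda>i. pi_n H (i + K)) \<longlonglongrightarrow> L" "\<forall>i. L \<le> pi_n H (i + K)"
    using decseq_convergent[OF dec, of 0] pi_n_nonneg[OF assms(2)] by blast
  have "(\<lambda>n. pi_n H n) \<longlonglongrightarrow> L" using LIMSEQ_offset[OF L(1)] .
  moreover have "L \<le> pi_n H n" if "n \<ge> K" for n using L(2)[rule_format, of "n - K"] that by simp
  ultimately show ?thesis using that Kb by blast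
qed



lemma embed_blowup:
  fixes H' :: "'b hypergraph" and G :: "nat hypergraph"
  assumes hH': "hypergraph H'" and bij: "bij_betw \<phi> {..<v} (fst H')"
    and psi: "\<psi> = the_inv_into {..<v} \<phi>"
    and s1: "s \<ge> 1" and fG: "fst G = {..<n}"
    and W: "\<forall>i<v. W i \<subseteq> {..<n} \<and> card (W i) = s"
    and box: "PiE {..<v} W \<subseteq> {g \<in> {..<v} \<rightarrow>\<^sub>E {..<n}. inj_on g {..<v} \<and> (\<forall>F\<in>snd H'. g ` (\<psi> ` F) \<in> snd G)}"
  shows "subhyp (blowup H' s) G"
proof -
  have injphi: "inj_on \<phi> {..<v}" and imphi: "\<phi> ` {..<v} = fst H'" using bij by (auto simp: bij_betw_def)
  have psi1: "\<psi> a < v" if "a \<in> fst H'" for a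
    using the_inv_into_into[OF injphi, of a "{..<v}"] that imphi psi by auto
  have psi2: "\<phi> (\<psi> a) = a" if "a \<in> fst H'" for a
    using f_the_inv_into_f[OF injphi, of a] that imphi psi by auto
  have "\<forall>i. \<exists>bb. i < v \<longrightarrow> bij_betw bb {..<s} (W i)"
  proof
    fix i show "\<exists>bb. i < v \<longrightarrow> bij_betw bb {..<s} (W i)"
    proof (cases "i < v")
      case True
      have "finite (W i)" using W True by (meson finite_lessThan finite_subset)
      then obtain bb where "bij_betw bb {0..<card (W i)} (W i)" using ex_bij_betw_nat_finite by blast
      then show ?thesis using W True by (auto simp: atLeast0LessThan)
    qed simp
  qed
  then obtain b where b0: "\<forall>i. i < v \<longrightarrow> bij_betw (b i) {..<s} (W i)" using choice[of "\<lambda>i bb. i < v \<longrightarrow> bij_betw bb {..<s} (W i)"] by blast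
  have b: "bij_betw (b i) {..<s} (W i)" if "i < v" for i using b0 that by blast
  have bW: "b i j \<in> W i" if "i < v" "j < s" for i j using b[OF that(1)] that(2) by (auto simp: bij_betw_def)
  have bn: "b i j < n" if "i < v" "j < s" for i j using bW[OF that] W that(1) by auto
  have Cp: "inj_on g {..<v} \<and> (\<forall>F\<in>snd H'. g ` (\<psi> ` F) \<in> snd G)" if "g \<in> PiE {..<v} W" for g
    using subsetD[OF box that] by simp
  define f where "f p = b (\<psi> (fst p)) (snd p)" for p
  have inj: "inj_on f (fst H' \<times> {..<s})"
  proof (rule inj_onI)
    fix p q assume p: "p \<in> fst H' \<times> {..<s}" and q: "q \<in> fst H' \<times> {..<s}" and e: "f p = f q"
    obtain a j where pa: "p = (a, j)" "a \<in> fst H'" "j < s" using p by auto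
    obtain a' j' where qa: "q = (a', j')" "a' \<in> fst H'" "j' < s" using q by auto
    have e': "b (\<psi> a) j = b (\<psi> a') j'" using e pa(1) qa(1) by (simp add: f_def)
    have va: "\<psi> a < v" "\<psi> a' < v" using psi1 pa(2) qa(2) by auto
    show "p = q"
    proof (cases "\<psi> a = \<psi> a'")
      case True
      have aa: "a = a'" using psi2[OF pa(2)] psi2[OF qa(2)] True by metis
      have "inj_on (b (\<psi> a)) {..<s}" using b[OF va(1)] by (simp add: bij_betw_def)
      moreover have "b (\<psi> a) j = b (\<psi> a) j'" using e' True by simp
      ultimately have "j = j'" using pa(3) qa(3) by (meson inj_onD lessThan_iff)
      then show ?thesis using pa(1) qa(1) aa by simp
    next
      case False
      define g where "g = restrict (\<lambda>i. if i = \<psi> a then b i j else if i = \<psi> a' then b i j' else b i 0) {..<v}"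
      have "g \<in> PiE {..<v} W" unfolding g_def restrict_PiE_iff using bW pa(3) qa(3) s1 by auto
      then have ig: "inj_on g {..<v}" using Cp by blast
      have g1: "g (\<psi> a) = b (\<psi> a) j" using va by (simp add: g_def)
      have g2: "g (\<psi> a') = b (\<psi> a') j'" using va False by (simp add: g_def)
      have "g (\<psi> a) = g (\<psi> a')" using g1 g2 e' by simp
      then have "\<psi> a = \<psi> a'" using inj_onD[OF ig] va by blast
      then show ?thesis using False by simp
    qed
  qed
  have img: "f ` fst (blowup H' s) \<subseteq> fst G"
    using bn psi1 fG by (auto simp: f_def blowup_def)
  have edges: "\<forall>X\<in>snd (blowup H' s). f ` X \<in> snd G"
  proof
    fix X assume "X \<in> snd (blowup H' s)"
    then obtain F h where F: "F \<in> snd H'" "X = (\<lambda>a. (a, h a)) ` F" "\<forall>a\<in>F. h a < s"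
      by (auto simp: blowup_def)
    have FV: "F \<subseteq> fst H'" using F(1) hH' by (auto simp: hypergraph_def)
    define g where "g = restrict (\<lambda>i. if \<phi> i \<in> F then b i (h (\<phi> i)) else b i 0) {..<v}"
    have "g \<in> PiE {..<v} W" using bW F(3) s1 by (auto simp: g_def)
    then have gE: "g ` (\<psi> ` F) \<in> snd G" using Cp F(1) by blast
    have "f ` X = g ` (\<psi> ` F)"
    proof -
      have "f ` X = (\<lambda>a. b (\<psi> a) (h a)) ` F" using F(2) by (auto simp: f_def image_image)
      also have "\<dots> = (\<lambda>a. g (\<psi> a)) ` F"
        using FV psi1 psi2 by (intro image_cong[OF refl]) (auto simp: g_def)
      also have "\<dots> = g ` (\<psi> ` F)" by (simp add: image_image)
      finally show ?thesis .
    qed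
    then show "f ` X \<in> snd G" using gE by simp
  qed
  have fb: "fst (blowup H' s) = fst H' \<times> {..<s}" by (simp add: blowup_def)
  show ?thesis unfolding subhyp_def using inj img edges fb by (intro exI[of _ f] conjI) simp_all
qed



lemma hard:
  fixes H :: "'a hypergraph" and H' :: "'b hypergraph"
  assumes hH': "hypergraph H'" and s2: "s \<ge> 2" and sub2: "subhyp H (blowup H' s)"
    and ne: "snd H' \<noteq> {}" and sz: "edge_sizes H = edge_sizes H'"
    and L: "(\<lambda>n. pi_n H' n) \<longlonglongrightarrow> L" and L0: "0 \<le> L" and Kb: "\<forall>k\<in>edge_sizes H'. k \<le> K"
    and eps: "\<epsilon> > 0"
  shows "\<exists>N. \<forall>n\<ge>N. pi_n H n \<le> L + \<epsilon>"
proof -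
  define v where "v = card (fst H')"
  have finV: "finite (fst H')" using hH' by (simp add: hypergraph_def)
  obtain \<phi> where bij: "bij_betw \<phi> {..<v} (fst H')"
    using ex_bij_betw_nat_finite[OF finV] by (auto simp: v_def atLeast0LessThan)
  define \<psi> where "\<psi> = the_inv_into {..<v} \<phi>"
  have injphi: "inj_on \<phi> {..<v}" and imphi: "\<phi> ` {..<v} = fst H'" using bij by (auto simp: bij_betw_def)
  have psi1: "\<psi> a < v" if "a \<in> fst H'" for a
    using the_inv_into_into[OF injphi, of a "{..<v}"] that imphi \<psi>_def by auto
  have psi2: "\<phi> (\<psi> a) = a" if "a \<in> fst H'" for a
    using f_the_inv_into_f[OF injphi, of a] that imphi \<psi>_def by auto
  have phi1: "\<phi> i \<in> fst H'" if "i < v" for i using imphi that by auto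
  have psi3: "\<psi> (\<phi> i) = i" if "i < v" for i using the_inv_into_f_f[OF injphi] that \<psi>_def by auto
  have finR: "finite (edge_sizes H')" using hH' finV by (auto simp: hypergraph_def edge_sizes_def intro: finite_subset)
  define C where "C = real (card (edge_sizes H'))"
  have Cpos: "C > 0" using finR ne by (auto simp: C_def edge_sizes_def card_gt_0_iff)
  obtain no where no: "\<forall>n\<ge>no. dist (pi_n H' n) L < \<epsilon> / 2"
    using L eps unfolding lim_sequentially by (meson half_gt_zero)
  define m where "m = max no (max K v)"
  have mK: "K \<le> m" and mv: "v \<le> m" by (auto simp: m_def)
  have d: "dist (pi_n H' m) L < \<epsilon> / 2" using no by (simp add: m_def)
  then have "\<bar>pi_n H' m - L\<bar> < \<epsilon> / 2" by (simp only: dist_real_def)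
  then have bm: "pi_n H' m < L + \<epsilon> / 2" by (simp only: abs_less_iff) linarith
  define c where "c = \<epsilon> / (2 * C * real (m choose v) * real v ^ v)"
  have bmv: "real (m choose v) > 0" using mv by simp
  have cpos: "c > 0" unfolding c_def using eps Cpos bmv by (intro divide_pos_pos mult_pos_pos) auto
  obtain Nb where Nb: "\<And>n T. n \<ge> Nb \<Longrightarrow> T \<subseteq> ({..<v} \<rightarrow>\<^sub>E {..<n}) \<Longrightarrow> c * real n ^ v \<le> real (card T) \<Longrightarrow>
           (\<exists>W. (\<forall>i<v. W i \<subseteq> {..<n} \<and> card (W i) = s) \<and> PiE {..<v} W \<subseteq> T)"
  proof -
    have "\<exists>N. \<forall>n\<ge>N. \<forall>T. T \<subseteq> ({..<v} \<rightarrow>\<^sub>E {..<n}) \<longrightarrow> c * real n ^ v \<le> real (card T) \<longrightarrow>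
           (\<exists>W. (\<forall>i<v. W i \<subseteq> {..<n} \<and> card (W i) = s) \<and> PiE {..<v} W \<subseteq> T)"
      using box_lemma[OF cpos] s2 by simp
    then obtain N where "\<forall>n\<ge>N. \<forall>T. T \<subseteq> ({..<v} \<rightarrow>\<^sub>E {..<n}) \<longrightarrow> c * real n ^ v \<le> real (card T) \<longrightarrow>
           (\<exists>W. (\<forall>i<v. W i \<subseteq> {..<n} \<and> card (W i) = s) \<and> PiE {..<v} W \<subseteq> T)" by (elim exE)
    then have N0: "\<forall>n\<ge>N. \<forall>T. T \<subseteq> ({..<v} \<rightarrow>\<^sub>E {..<n}) \<longrightarrow> c * real n ^ v \<le> real (card T) \<longrightarrow>
           (\<exists>W. (\<forall>i<v. W i \<subseteq> {..<n} \<and> card (W i) = s) \<and> PiE {..<v} W \<subseteq> T)" .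
    show ?thesis
    proof (rule that)
      fix n T assume a: "n \<ge> N" "T \<subseteq> ({..<v} \<rightarrow>\<^sub>E {..<n})" "c * real n ^ v \<le> real (card T)"
      show "\<exists>W. (\<forall>i<v. W i \<subseteq> {..<n} \<and> card (W i) = s) \<and> PiE {..<v} W \<subseteq> T"
        using N0 a by blast
    qed
  qed
  have neH: "snd H \<noteq> {}" using sz ne by (auto simp: edge_sizes_def)
  show ?thesis
  proof (intro exI[of _ "max Nb m"] allI impI)
    fix n assume nN: "max Nb m \<le> n"
    then have nNb: "n \<ge> Nb" and nm: "m \<le> n" by auto
    show "pi_n H n \<le> L + \<epsilon>"
    proof (rule ccontr)
      assume contra: "\<not> pi_n H n \<le> L + \<epsilon>"
      obtain G where G: "G \<in> Adm H n" "pi_n H n = h_dens n G"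
        using pi_n_attained[OF Adm_nonempty[OF neH]] by blast
      have hG: "hypergraph G" "fst G = {..<n}" "edge_sizes G \<subseteq> edge_sizes H'" "\<not> subhyp H G"
        using G(1) sz by (auto simp: Adm_def)
      have hGbig: "L + \<epsilon> < h_dens n G" using contra G(2) by simp
      have EP: "snd G \<subseteq> Pow {..<n}" using hG by (auto simp: hypergraph_def)
      have Ek: "\<forall>F\<in>snd G. card F \<le> m" using hG Kb mK by (force simp: edge_sizes_def)
      define I where "I = injs m n"
      have finI: "finite I" by (simp add: I_def finite_injs)
      have NIpos: "card I > 0" using injs_nonempty[OF nm] finite_injs by (simp add: I_def card_gt_0_iff)
      have avg: "(\<Sum>\<sigma>\<in>I. h_dens m (pb m \<sigma> G)) = real (card I) * h_dens n G"
        unfolding I_def by (rule averaging[OF EP Ek nm])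
      define P where "P \<sigma> = (L + \<epsilon> / 2 < h_dens m (pb m \<sigma> G))" for \<sigma>
      define good where "good = {\<sigma>\<in>I. P \<sigma>}"
      have hC: "h_dens m (pb m \<sigma> G) \<le> C" if "\<sigma> \<in> I" for \<sigma>
      proof -
        have "h_dens m (pb m \<sigma> G) \<le> real (card (edge_sizes (pb m \<sigma> G)))" by (rule h_bound[OF pb_hyp])
        also have "\<dots> \<le> C" unfolding C_def
          using pb_sizes[of \<sigma> m n G] that hG(3) finR by (simp add: I_def card_mono)
        finally show ?thesis .
      qed
      have "(\<Sum>\<sigma>\<in>I. h_dens m (pb m \<sigma> G)) \<le> (\<Sum>\<sigma>\<in>I. (if P \<sigma> then C else 0) + (L + \<epsilon> / 2))"
      proof (rule sum_mono)
        fix \<sigma> assume "\<sigma> \<in> I"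
        then show "h_dens m (pb m \<sigma> G) \<le> (if P \<sigma> then C else 0) + (L + \<epsilon> / 2)"
          using hC[of \<sigma>] L0 eps Cpos by (auto simp: P_def)
      qed
      also have "\<dots> = C * real (card good) + real (card I) * (L + \<epsilon> / 2)"
        by (simp add: sum.distrib sum.inter_filter[OF finI, symmetric] good_def)
      finally have "real (card I) * h_dens n G \<le> C * real (card good) + real (card I) * (L + \<epsilon> / 2)"
        using avg by simp
      moreover have "real (card I) * (L + \<epsilon>) < real (card I) * h_dens n G"
        using hGbig NIpos by simp
      ultimately have goodb: "real (card I) * (\<epsilon> / 2) < C * real (card good)"
        by (simp add: algebra_simps)
      define Cp where "Cp = {g \<in> {..<v} \<rightarrow>\<^sub>E {..<n}. inj_on g {..<v} \<and> (\<forall>F\<in>snd H'. g ` (\<psi> ` F) \<in> snd G)}"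
      have finCp: "finite Cp" unfolding Cp_def
        by (rule finite_subset[of _ "{..<v} \<rightarrow>\<^sub>E {..<n}"]) (auto simp: finite_PiE)
      have cover: "\<exists>g\<in>Cp. g ` {..<v} \<subseteq> \<sigma> ` {..<m}" if s: "\<sigma> \<in> good" for \<sigma>
      proof -
        have sI: "\<sigma> \<in> injs m n" using s by (simp add: good_def I_def)
        have "subhyp H' (pb m \<sigma> G)"
        proof (rule ccontr)
          assume "\<not> subhyp H' (pb m \<sigma> G)"
          then have "pb m \<sigma> G \<in> Adm H' m" using pb_hyp pb_sizes[OF sI, of G] hG(3) by (auto simp: Adm_def)
          then have "h_dens m (pb m \<sigma> G) \<le> pi_n H' m" by (rule pi_n_ge)
          then show False using bm s by (simp add: good_def P_def)
        qed
        then obtain f where f: "inj_on f (fst H')" "f ` fst H' \<subseteq> {..<m}" "\<forall>F\<in>snd H'. f ` F \<in> snd (pb m \<sigma> G)"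
          by (auto simp: subhyp_def pb_def)
        have sr: "\<sigma> ` {..<m} \<subseteq> {..<n}" "inj_on \<sigma> {..<m}" using sI by (auto simp: injs_def PiE_def Pi_def)
        define g where "g = restrict (\<lambda>i. \<sigma> (f (\<phi> i))) {..<v}"
        have "\<sigma> (f (\<phi> i)) \<in> {..<n}" if "i < v" for i
        proof -
          have "f (\<phi> i) \<in> {..<m}" using f(2) phi1[OF that] by blast
          then show ?thesis using sr(1) by blast
        qed
        then have gP: "g \<in> {..<v} \<rightarrow>\<^sub>E {..<n}" by (auto simp: g_def)
        have gi: "inj_on g {..<v}"
        proof (rule inj_onI)
          fix i j assume ij: "i \<in> {..<v}" "j \<in> {..<v}" "g i = g j"
          then have "\<sigma> (f (\<phi> i)) = \<sigma> (f (\<phi> j))" by (simp add: g_def)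
          then have "f (\<phi> i) = f (\<phi> j)" using inj_onD[OF sr(2)] f(2) phi1 ij by blast
          then have "\<phi> i = \<phi> j" using inj_onD[OF f(1)] phi1 ij by blast
          then show "i = j" using inj_onD[OF injphi] ij by blast
        qed
        have gE: "g ` (\<psi> ` F) = \<sigma> ` (f ` F)" if F: "F \<in> snd H'" for F
        proof -
          have FV: "F \<subseteq> fst H'" using F hH' by (auto simp: hypergraph_def)
          have "g ` (\<psi> ` F) = (\<lambda>a. g (\<psi> a)) ` F" by (simp add: image_image)
          also have "\<dots> = (\<lambda>a. \<sigma> (f a)) ` F"
          proof (rule image_cong[OF refl])
            fix a assume "a \<in> F"
            then have a: "a \<in> fst H'" using FV by auto
            show "g (\<psi> a) = \<sigma> (f a)" using psi1[OF a] psi2[OF a] by (simp add: g_def)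
          qed
          also have "\<dots> = \<sigma> ` (f ` F)" by (simp add: image_image)
          finally show ?thesis .
        qed
        have "g \<in> Cp" unfolding Cp_def using gP gi gE f(3) by (auto simp: pb_def)
        moreover have "g ` {..<v} \<subseteq> \<sigma> ` {..<m}" using f(2) phi1 by (auto simp: g_def)
        ultimately show ?thesis by blast
      qed
      define c0 where "c0 = cnt m n {..<v}"
      have cnteq: "cnt m n (g ` {..<v}) = c0" if "g \<in> Cp" for g
      proof -
        have "g ` {..<v} \<subseteq> {..<n}" "inj_on g {..<v}" using that by (auto simp: Cp_def PiE_def Pi_def)
        then show ?thesis unfolding c0_def using mv nm by (intro cnt_eq) (auto simp: card_image)
      qed
      have "good \<subseteq> (\<Union>g\<in>Cp. {\<sigma>\<in>I. g ` {..<v} \<subseteq> \<sigma> ` {..<m}})"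
        using cover by (auto simp: good_def)
      then have "card good \<le> card (\<Union>g\<in>Cp. {\<sigma>\<in>I. g ` {..<v} \<subseteq> \<sigma> ` {..<m}})"
        using finI finCp by (intro card_mono finite_UN_I) auto
      also have "\<dots> \<le> (\<Sum>g\<in>Cp. card {\<sigma>\<in>I. g ` {..<v} \<subseteq> \<sigma> ` {..<m}})" by (rule card_UN_le[OF finCp])
      also have "\<dots> = (\<Sum>g\<in>Cp. c0)"
        by (rule sum.cong[OF refl]) (simp add: cnteq[symmetric] cnt_def I_def)
      finally have gc: "card good \<le> card Cp * c0" by simp
      have c0f: "c0 * (n choose v) = card I * (m choose v)"
        using cnt_formula[OF nm, of "{..<v}"] mv nm by (simp add: c0_def I_def)
      have bnv: "real (n choose v) > 0" using mv nm by simp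
      have "real (card I) * (\<epsilon> / 2) * real (n choose v) < C * real (card good) * real (n choose v)"
        using goodb bnv by simp
      also have "\<dots> \<le> C * (real (card Cp) * real c0) * real (n choose v)"
        using gc Cpos bnv by (intro mult_right_mono mult_left_mono) (auto simp flip: of_nat_mult)
      also have "\<dots> = C * real (card Cp) * (real c0 * real (n choose v))" by simp
      also have "\<dots> = C * real (card Cp) * (real (card I) * real (m choose v))"
        using c0f by (metis of_nat_mult)
      finally have "real (card I) * ((\<epsilon> / 2) * real (n choose v)) < real (card I) * (C * real (card Cp) * real (m choose v))"
        by (simp add: algebra_simps)
      then have main: "(\<epsilon> / 2) * real (n choose v) < C * real (card Cp) * real (m choose v)"
        using NIpos by simp
      have "(real n / real v) ^ v \<le> real (n choose v)" using binomial_ge_n_over_k_pow_k[of v n] mv nm by simp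
      then have "real n ^ v / real v ^ v \<le> real (n choose v)" by (simp add: power_divide)
      then have "(\<epsilon> / 2) * (real n ^ v / real v ^ v) \<le> (\<epsilon> / 2) * real (n choose v)"
        using eps by (intro mult_left_mono) auto
      with main have ineq: "(\<epsilon> / 2) * (real n ^ v / real v ^ v) < C * real (card Cp) * real (m choose v)" by linarith
      have vpos: "real v ^ v > 0"
      proof (cases "v = 0")
        case False then show ?thesis by simp
      qed simp
      have "c * real n ^ v = (\<epsilon> / 2) * (real n ^ v / real v ^ v) / (C * real (m choose v))"
        unfolding c_def using Cpos bmv vpos by (simp add: field_simps)
      also have "\<dots> \<le> real (card Cp)"
      proof -
        have Dpos: "C * real (m choose v) > 0" using Cpos bmv by simp
        have ineq': "(\<epsilon> / 2) * (real n ^ v / real v ^ v) \<le> real (card Cp) * (C * real (m choose v))"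
          using ineq by (simp add: mult_ac)
        show ?thesis by (subst pos_divide_le_eq[OF Dpos]) (use ineq' in linarith)
      qed
      finally have cCp: "c * real n ^ v \<le> real (card Cp)" .
      have CpP: "Cp \<subseteq> {..<v} \<rightarrow>\<^sub>E {..<n}" by (auto simp: Cp_def)
      obtain W where W: "\<forall>i<v. W i \<subseteq> {..<n} \<and> card (W i) = s" "PiE {..<v} W \<subseteq> Cp"
        using Nb[OF nNb CpP cCp] by blast
      have "subhyp (blowup H' s) G"
        by (rule embed_blowup[OF hH' bij \<psi>_def _ hG(2) W(1)]) (use s2 W(2) in \<open>auto simp: Cp_def\<close>)
      then have "subhyp H G" by (rule subhyp_trans[OF sub2])
      then show False using hG(4) by simp
    qed
  qed
qed



lemma adm_empty:
  assumes "hypergraph X" "snd X = {}" "card (fst X) \<le> n"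
  shows "Adm X n = {}"
proof (rule ccontr)
  assume "Adm X n \<noteq> {}"
  then obtain G where G: "G \<in> Adm X n" by blast
  have fG: "fst G = {..<n}" and ns: "\<not> subhyp X G" using G by (auto simp: Adm_def)
  have finX: "finite (fst X)" using assms(1) by (simp add: hypergraph_def)
  obtain h where h: "bij_betw h (fst X) {0..<card (fst X)}" using ex_bij_betw_finite_nat[OF finX] by blast
  have "inj_on h (fst X)" "h ` fst X \<subseteq> {..<n}" using h assms(3) by (auto simp: bij_betw_def)
  then have "subhyp X G" unfolding subhyp_def using fG assms(2) by (intro exI[of _ h]) simp
  then show False using ns by simp
qed

lemma lim_eventually_eq:
  fixes X Y :: "nat \<Rightarrow> real"
  assumes "\<forall>n\<ge>N. X n = Y n"
  shows "lim X = lim Y"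
proof -
  have e: "(\<lambda>n. X (n + N)) = (\<lambda>n. Y (n + N))" using assms by simp
  have "X \<longlonglongrightarrow> l \<longleftrightarrow> Y \<longlonglongrightarrow> l" for l
  proof
    assume "X \<longlonglongrightarrow> l"
    then have "(\<lambda>n. Y (n + N)) \<longlonglongrightarrow> l" using LIMSEQ_ignore_initial_segment[of X l N] e by simp
    then show "Y \<longlonglongrightarrow> l" by (rule LIMSEQ_offset)
  next
    assume "Y \<longlonglongrightarrow> l"
    then have "(\<lambda>n. X (n + N)) \<longlonglongrightarrow> l" using LIMSEQ_ignore_initial_segment[of Y l N] e by simp
    then show "X \<longlonglongrightarrow> l" by (rule LIMSEQ_offset)
  qed
  then show ?thesis unfolding lim_def by simp
qed

theorem mainTheorem5:
  fixes H :: "'a hypergraph" and H' :: "'b hypergraph" and s :: nat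
  assumes "hypergraph H" and "hypergraph H'"
    and "s \<ge> 2"
    and "subhyp H' H" and "subhyp H (blowup H' s)"
  shows "pi_lim H = pi_lim H'"
proof -
  note hH = assms(1) and hH' = assms(2) and s2 = assms(3) and sub1 = assms(4) and sub2 = assms(5)
  have "edge_sizes H \<subseteq> edge_sizes H'"
    using subhyp_sizes[OF hH sub2] blowup_sizes[of H' s] by blast
  moreover have "edge_sizes H' \<subseteq> edge_sizes H" by (rule subhyp_sizes[OF hH' sub1])
  ultimately have sz: "edge_sizes H = edge_sizes H'" by blast
  show ?thesis
  proof (cases "snd H' = {}")
    case True
    then have eH: "snd H = {}" using sz by (simp add: edge_sizes_def)
    have "\<forall>n\<ge>card (fst H) + card (fst H'). pi_n H n = pi_n H' n"
    proof (intro allI impI)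
      fix n assume n: "card (fst H) + card (fst H') \<le> n"
      have "Adm H n = {}" using adm_empty[OF hH eH] n by simp
      moreover have "Adm H' n = {}" using adm_empty[OF hH' True] n by simp
      ultimately show "pi_n H n = pi_n H' n" by (simp add: pi_n_Adm)
    qed
    then show ?thesis unfolding pi_lim_def by (rule lim_eventually_eq)
  next
    case False
    obtain L K where L: "(\<lambda>n. pi_n H' n) \<longlonglongrightarrow> L" and LK: "\<And>n. n \<ge> K \<Longrightarrow> L \<le> pi_n H' n"
      and Kb: "\<forall>k\<in>edge_sizes H'. k \<le> K"
      using pi_conv[OF hH' False] by blast
    have L0: "0 \<le> L" using L pi_n_nonneg[OF False] by (intro LIMSEQ_le_const[OF L]) auto
    have neH: "snd H \<noteq> {}" using sz False by (auto simp: edge_sizes_def)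
    have le: "pi_n H' n \<le> pi_n H n" for n
    proof -
      have "Adm H' n \<subseteq> Adm H n"
      proof
        fix G assume G: "G \<in> Adm H' n"
        have "\<not> subhyp H G"
        proof
          assume "subhyp H G"
          then have "subhyp H' G" by (rule subhyp_trans[OF sub1])
          then show False using G by (simp add: Adm_def)
        qed
        then show "G \<in> Adm H n" using G sz by (simp add: Adm_def)
      qed
      then show ?thesis unfolding pi_n_Adm
        using Adm_nonempty[OF False, of n] finite_Adm[of H n]
        by (intro Max_mono image_mono finite_imageI) auto
    qed
    have conv: "(\<lambda>n. pi_n H n) \<longlonglongrightarrow> L"
      unfolding lim_sequentially
    proof (intro allI impI)
      fix r :: real assume r: "r > 0"
      obtain N1 where N1: "\<forall>n\<ge>N1. pi_n H n \<le> L + r / 2"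
        using hard[OF hH' s2 sub2 False sz L L0 Kb, of "r / 2"] r by auto
      show "\<exists>no. \<forall>n\<ge>no. dist (pi_n H n) L < r"
      proof (intro exI[of _ "max N1 K"] allI impI)
        fix n assume n: "max N1 K \<le> n"
        have a: "pi_n H n \<le> L + r / 2" using N1 n by simp
        have b: "L \<le> pi_n H n" using LK[of n] le[of n] n by simp
        show "dist (pi_n H n) L < r" unfolding dist_real_def using a b r by (simp add: abs_if)
      qed
    qed
    show ?thesis unfolding pi_lim_def using limI[OF conv] limI[OF L] by simp
  qed
qed


end
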